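(* For every $x\in H$, \[ S^{\delta,\mathscr{P}}_{\pi}(x)\le\sum_{a\in\mathcal{A}}\pi(a|x)\,Q^{\delta,\mathscr{P}}_{\pi}(x,a). \]
   Context: Consider a Markov decision process with a finite state set $\mathcal{X}$, viewed as a subset of $\mathbb{R}$ (so $|y-z|$ is the distance between states), and a finite action set $\mathcal{A}$. The state set is partitioned into a goal set $E$, a forbidden (unsafe) set $U$, and $H:=\mathcal{X}\setminus(E\cup U)$; $E$ and $U$ are terminal (the process stops there). For each $(x,a)\in H\times\mathcal{A}$ a nominal transition probability $\mathcal{P}_{x,a}=\{P_{x,a}(y)\}_{y\in\mathcal{X}}$ on $\mathcal{X}$ is given, and $\mathscr{P}=\{\mathcal{P}_{x,a}\}_{(x,a)\in H\times\mathcal{A}}$; transition probabilities are time-invariant. The sample space is $\Omega=(\mathcal{X}\times\mathcal{A})^{\infty}$ with coordinate processes $X_t,A_t$. A stationary policy is $\pi:\mathcal{X}\to\mathscr{M}(\mathcal{A})$, written $\pi(a|x)$. For any collection $\tilde{\mathscr{P}}=\{\tilde{\mathcal{P}}_{x,a}\}_{(x,a)\in H\times\mathcal{A}}$ of transition probabilities, $\mathbb{P}^{\tilde{\mathscr{P}}}_{\pi}$ and $\mathbb{E}^{\tilde{\mathscr{P}}}_{\pi}$ denote probability and expectation for the process with $X_{t+1}\sim\tilde{\mathcal{P}}_{X_t,A_t}$ and $A_t\sim\pi(\cdot|X_t)$ (except when $A_0$ is conditioned on). For $S\subseteq\mathcal{X}$, $\tau_S$ is the first hitting time of $S$, and $\tau=\tau_{E\cup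 U}$. The 1-Wasserstein distance between probability measures $\mu,\nu$ on $\mathcal{X}$ is $W(\mu,\nu)=\min\{\sum_{(y,z)}\Gamma(y,z)|y-z| : \Gamma\in\mathscr{M}(\mathcal{X}\times\mathcal{X}),\ \sum_z\Gamma(y,z)=\mu(y),\ \sum_y\Gamma(y,z)=\nu(z)\}$. For $\delta\ge0$, $\mathcal{D}^{\delta}_{x,a}=\{\tilde{\mathcal{P}}_{x,a}\in\mathscr{M}(\mathcal{X}): W(\tilde{\mathcal{P}}_{x,a},\mathcal{P}_{x,a})\le\delta\}$ and $\mathscr{D}^{\delta}=\prod_{(x,a)\in H\times\mathcal{A}}\mathcal{D}^{\delta}_{x,a}$. The robust safety function is $S^{\delta,\mathscr{P}}_{\pi}(x)=\sup_{\tilde{\mathscr{P}}\in\mathscr{D}^{\delta}}\mathbb{P}^{\tilde{\mathscr{P}}}_{\pi}[\tau_U<\tau_E\mid X_0=x]$ for $x\in H$. The robust Q-function is, for $(x,a)\in H\times\mathcal{A}$, $Q^{\delta,\mathscr{P}}_{\pi}(x,a)=\sup_{\tilde{\mathscr{P}}\in\mathscr{D}^{\delta}}\mathbb{E}^{\tilde{\mathscr{P}}}_{\pi}\big[\sum_{t=0}^{\tau-1}c_{t+1}\mid X_0=x,A_0=a\big]$, where $c_{t+1}=1$ if $X_{t+1}\in U$ and $0$ otherwise. *)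

theory Defs
  imports "HOL-Analysis.Analysis"
begin

definition is_dist :: "'b set \<Rightarrow> ('b \<Rightarrow> real) \<Rightarrow> bool" where
  "is_dist S \<mu> \<longleftrightarrow> (\<forall>y. 0 \<le> \<mu> y) \<and> (\<forall>y. y \<notin> S \<longrightarrow> \<mu> y = 0) \<and> sum \<mu> S = 1"

definition couplings :: "real set \<Rightarrow> (real \<Rightarrow> real) \<Rightarrow> (real \<Rightarrow> real) \<Rightarrow> (real \<times> real \<Rightarrow> real) set" where
  "couplings Xs \<mu> \<nu> = {\<Gamma>. is_dist (Xs \<times> Xs) \<Gamma>
      \<and> (\<forall>y\<in>Xs. (\<Sum>z\<in>Xs. \<Gamma> (y, z)) = \<mu> y)
      \<and> (\<forall>z\<in>Xs. (\<Sum>y\<in>Xs. \<Gamma> (y, z)) = \<nu> z)}"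

text \<open>1-Wasserstein distance (the minimum is attained; we write it as the infimum).\<close>
definition wasserstein :: "real set \<Rightarrow> (real \<Rightarrow> real) \<Rightarrow> (real \<Rightarrow> real) \<Rightarrow> real" where
  "wasserstein Xs \<mu> \<nu> = Inf ((\<lambda>\<Gamma>. \<Sum>(y, z)\<in>Xs \<times> Xs. \<Gamma> (y, z) * \<bar>y - z\<bar>) ` couplings Xs \<mu> \<nu>)"

text \<open>Ambiguity set: collections of transition probabilities (indexed by (x,a) in H \<times> As)
  within Wasserstein distance \<delta> of the nominal ones.\<close>
definition ambiguity_set ::
  "real set \<Rightarrow> 'a set \<Rightarrow> real set \<Rightarrow> real set \<Rightarrow> (real \<Rightarrow> 'a \<Rightarrow> real \<Rightarrow> real) \<Rightarrow> real
    \<Rightarrow> (real \<Rightarrow> 'a \<Rightarrow> real \<Rightarrow> real) set" where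
  "ambiguity_set Xs As E U P \<delta> = {Pt. \<forall>x\<in>Xs - (E \<union> U). \<forall>a\<in>As.
      is_dist Xs (Pt x a) \<and> wasserstein Xs (Pt x a) (P x a) \<le> \<delta>}"

text \<open>first_hitU Xs As E U Pt \<pi> n x  =  P^{Pt}_\<pi>[X_0,...,X_{n-1} \<in> H, X_n \<in> U | X_0 = x],
  i.e. the probability that the first visit to E \<union> U happens at time n and lies in U
  (the process stops in the terminal sets E and U).\<close>
fun first_hitU ::
  "real set \<Rightarrow> 'a set \<Rightarrow> real set \<Rightarrow> real set \<Rightarrow> (real \<Rightarrow> 'a \<Rightarrow> real \<Rightarrow> real)
    \<Rightarrow> (real \<Rightarrow> 'a \<Rightarrow> real) \<Rightarrow> nat \<Rightarrow> real \<Rightarrow> real" where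
  "first_hitU Xs As E U Pt \<pi> 0 x = (if x \<in> U then 1 else 0)"
| "first_hitU Xs As E U Pt \<pi> (Suc n) x =
     (if x \<in> Xs - (E \<union> U)
      then (\<Sum>a\<in>As. \<pi> x a * (\<Sum>y\<in>Xs. Pt x a y * first_hitU Xs As E U Pt \<pi> n y))
      else 0)"

text \<open>P^{Pt}_\<pi>[\<tau>_U < \<tau>_E | X_0 = x] as the sum over the disjoint events {\<tau> = n, X_n \<in> U}.\<close>
definition unsafe_prob ::
  "real set \<Rightarrow> 'a set \<Rightarrow> real set \<Rightarrow> real set \<Rightarrow> (real \<Rightarrow> 'a \<Rightarrow> real \<Rightarrow> real)
    \<Rightarrow> (real \<Rightarrow> 'a \<Rightarrow> real) \<Rightarrow> real \<Rightarrow> real" where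
  "unsafe_prob Xs As E U Pt \<pi> x = (\<Sum>n. first_hitU Xs As E U Pt \<pi> n x)"

text \<open>E^{Pt}_\<pi>[\<Sum>_{t=0}^{\<tau>-1} c_{t+1} | X_0 = x, A_0 = a]
  = \<Sum>_t P[t < \<tau>, X_{t+1} \<in> U | X_0 = x, A_0 = a]
  = \<Sum>_t P[X_0..X_t \<in> H, X_{t+1} \<in> U | X_0 = x, A_0 = a].\<close>
definition expected_cost ::
  "real set \<Rightarrow> 'a set \<Rightarrow> real set \<Rightarrow> real set \<Rightarrow> (real \<Rightarrow> 'a \<Rightarrow> real \<Rightarrow> real)
    \<Rightarrow> (real \<Rightarrow> 'a \<Rightarrow> real) \<Rightarrow> real \<Rightarrow> 'a \<Rightarrow> real" where
  "expected_cost Xs As E U Pt \<pi> x a =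
     (\<Sum>t. \<Sum>y\<in>Xs. Pt x a y * first_hitU Xs As E U Pt \<pi> t y)"

definition robust_safety ::
  "real set \<Rightarrow> 'a set \<Rightarrow> real set \<Rightarrow> real set \<Rightarrow> (real \<Rightarrow> 'a \<Rightarrow> real \<Rightarrow> real) \<Rightarrow> real
    \<Rightarrow> (real \<Rightarrow> 'a \<Rightarrow> real) \<Rightarrow> real \<Rightarrow> real" where
  "robust_safety Xs As E U P \<delta> \<pi> x =
     (SUP Pt\<in>ambiguity_set Xs As E U P \<delta>. unsafe_prob Xs As E U Pt \<pi> x)"

definition robust_Q ::
  "real set \<Rightarrow> 'a set \<Rightarrow> real set \<Rightarrow> real set \<Rightarrow> (real \<Rightarrow> 'a \<Rightarrow> real \<Rightarrow> real) \<Rightarrow> real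
    \<Rightarrow> (real \<Rightarrow> 'a \<Rightarrow> real) \<Rightarrow> real \<Rightarrow> 'a \<Rightarrow> real" where
  "robust_Q Xs As E U P \<delta> \<pi> x a =
     (SUP Pt\<in>ambiguity_set Xs As E U P \<delta>. expected_cost Xs As E U Pt \<pi> x a)"

end

theory Submission
  imports Defs
begin

lemma is_dist_nn: "is_dist S \<mu> \<Longrightarrow> 0 \<le> \<mu> y" by (simp add: is_dist_def)
lemma is_dist_sum: "is_dist S \<mu> \<Longrightarrow> sum \<mu> S = 1" by (simp add: is_dist_def)

context
  fixes Xs :: "real set" and As :: "'a set" and E U :: "real set"
    and Pt :: "real \<Rightarrow> 'a \<Rightarrow> real \<Rightarrow> real" and \<pi> :: "real \<Rightarrow> 'a \<Rightarrow> real"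
  assumes fin: "finite Xs" and finA: "finite As" and UX: "U \<subseteq> Xs"
    and Ptd: "\<forall>y\<in>Xs - (E \<union> U). \<forall>a\<in>As. is_dist Xs (Pt y a)"
    and pid: "\<forall>y\<in>Xs. is_dist As (\<pi> y)"
begin

lemma fh_nonneg: "0 \<le> first_hitU Xs As E U Pt \<pi> n y"
proof (induction n arbitrary: y)
  case 0 then show ?case by simp
next
  case (Suc n)
  show ?case
  proof (cases "y \<in> Xs - (E \<union> U)")
    case True
    then have "\<forall>a\<in>As. is_dist Xs (Pt y a)" "is_dist As (\<pi> y)" using Ptd pid by auto
    then have n1: "\<And>a z. a \<in> As \<Longrightarrow> 0 \<le> Pt y a z" and n2: "\<And>a. 0 \<le> \<pi> y a"
      by (metis is_dist_nn)+
    show ?thesis using True Suc n1 n2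
      by (auto intro!: sum_nonneg mult_nonneg_nonneg)
  next
    case False then show ?thesis by auto
  qed
qed

lemma fh_partial: "(\<Sum>k<n. first_hitU Xs As E U Pt \<pi> k y) \<le> 1"
proof (induction n arbitrary: y)
  case 0 then show ?case by simp
next
  case (Suc n)
  let ?f = "first_hitU Xs As E U Pt \<pi>"
  have split: "(\<Sum>k<Suc n. ?f k y) = ?f 0 y + (\<Sum>k<n. ?f (Suc k) y)"
    by (rule sum.lessThan_Suc_shift)
  show ?case
  proof (cases "y \<in> Xs - (E \<union> U)")
    case True
    then have d: "\<forall>a\<in>As. is_dist Xs (Pt y a)" and p: "is_dist As (\<pi> y)" using Ptd pid by auto
    have "(\<Sum>k<n. ?f (Suc k) y) = (\<Sum>k<n. \<Sum>a\<in>As. \<pi> y a * (\<Sum>z\<in>Xs. Pt y a z * ?f k z))"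
      using True by simp
    also have "\<dots> = (\<Sum>a\<in>As. \<pi> y a * (\<Sum>z\<in>Xs. Pt y a z * (\<Sum>k<n. ?f k z)))"
      by (simp add: sum_distrib_left sum.swap[of _ "{..<n}"] mult.assoc)
    also have "\<dots> \<le> (\<Sum>a\<in>As. \<pi> y a * (\<Sum>z\<in>Xs. Pt y a z * 1))"
    proof (intro sum_mono mult_left_mono)
      fix a z assume "a \<in> As" "z \<in> Xs"
      then have "is_dist Xs (Pt y a)" using d by auto
      then show "0 \<le> Pt y a z" by (rule is_dist_nn)
    next
      fix a z assume "a \<in> As" "z \<in> Xs"
      show "(\<Sum>k<n. ?f k z) \<le> 1" by (rule Suc.IH)
    next
      fix a assume "a \<in> As"
      show "0 \<le> \<pi> y a" using p by (rule is_dist_nn)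
    qed
    also have "\<dots> = 1" using d p by (simp add: is_dist_sum)
    finally show ?thesis using split True by simp
  next
    case False
    then have "(\<Sum>k<n. ?f (Suc k) y) = 0" by auto
    then show ?thesis using split by simp
  qed
qed

lemma fh_summable: "summable (\<lambda>n. first_hitU Xs As E U Pt \<pi> n y)"
  by (rule summableI_nonneg_bounded[where x=1]) (auto intro: fh_nonneg fh_partial)

lemma ec_partial:
  assumes "x \<in> Xs - (E \<union> U)" "a \<in> As"
  shows "(\<Sum>t<n. \<Sum>y\<in>Xs. Pt x a y * first_hitU Xs As E U Pt \<pi> t y) \<le> 1"
proof -
  have d: "is_dist Xs (Pt x a)" using assms Ptd by auto
  have "(\<Sum>t<n. \<Sum>y\<in>Xs. Pt x a y * first_hitU Xs As E U Pt \<pi> t y)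
      = (\<Sum>y\<in>Xs. Pt x a y * (\<Sum>t<n. first_hitU Xs As E U Pt \<pi> t y))"
    by (simp add: sum_distrib_left sum.swap[of _ "{..<n}"])
  also have "\<dots> \<le> (\<Sum>y\<in>Xs. Pt x a y * 1)"
    using d fh_partial by (intro sum_mono mult_left_mono) (auto intro: is_dist_nn)
  also have "\<dots> = 1" using d by (simp add: is_dist_sum)
  finally show ?thesis .
qed

lemma ec_summable:
  assumes "x \<in> Xs - (E \<union> U)" "a \<in> As"
  shows "summable (\<lambda>t. \<Sum>y\<in>Xs. Pt x a y * first_hitU Xs As E U Pt \<pi> t y)"
proof -
  have d: "is_dist Xs (Pt x a)" using assms Ptd by auto
  show ?thesis
    by (rule summableI_nonneg_bounded[where x=1])
      (use is_dist_nn[OF d] ec_partial[OF assms] fh_nonneg in \<open>auto intro!: sum_nonneg mult_nonneg_nonneg\<close>)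
qed

lemma ec_le1:
  assumes "x \<in> Xs - (E \<union> U)" "a \<in> As"
  shows "expected_cost Xs As E U Pt \<pi> x a \<le> 1"
  unfolding expected_cost_def
  by (rule suminf_le_const[OF ec_summable[OF assms]]) (rule ec_partial[OF assms])

lemma unsafe_eq:
  assumes x: "x \<in> Xs - (E \<union> U)"
  shows "unsafe_prob Xs As E U Pt \<pi> x = (\<Sum>a\<in>As. \<pi> x a * expected_cost Xs As E U Pt \<pi> x a)"
proof -
  let ?f = "first_hitU Xs As E U Pt \<pi>"
  have "unsafe_prob Xs As E U Pt \<pi> x = (\<Sum>n. ?f (Suc n) x) + ?f 0 x"
    unfolding unsafe_prob_def using suminf_split_head[OF fh_summable[of x]] by simp
  also have "?f 0 x = 0" using x by simp
  also have "(\<Sum>n. ?f (Suc n) x) = (\<Sum>n. \<Sum>a\<in>As. \<pi> x a * (\<Sum>y\<in>Xs. Pt x a y * ?f n y))"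
    using x by simp
  also have "\<dots> = (\<Sum>a\<in>As. \<Sum>n. \<pi> x a * (\<Sum>y\<in>Xs. Pt x a y * ?f n y))"
    by (rule suminf_sum) (use ec_summable[OF x] in \<open>auto intro: summable_mult\<close>)
  also have "\<dots> = (\<Sum>a\<in>As. \<pi> x a * expected_cost Xs As E U Pt \<pi> x a)"
    unfolding expected_cost_def
    by (rule sum.cong[OF refl]) (use ec_summable[OF x] in \<open>auto intro: suminf_mult\<close>)
  finally show ?thesis by simp
qed

end

lemma wasserstein_self:
  assumes "finite Xs" "is_dist Xs \<mu>"
  shows "wasserstein Xs \<mu> \<mu> \<le> 0"
proof -
  define \<Gamma> where "\<Gamma> = (\<lambda>(y::real, z::real). if y = z then \<mu> y else 0)"
  have "\<Gamma> \<in> couplings Xs \<mu> \<mu>"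
  proof -
    have "(\<Sum>p\<in>Xs \<times> Xs. \<Gamma> p) = (\<Sum>y\<in>Xs. \<Sum>z\<in>Xs. \<Gamma> (y, z))"
      by (simp add: sum.cartesian_product)
    also have "\<dots> = (\<Sum>y\<in>Xs. \<mu> y)" using assms(1)
      by (simp add: \<Gamma>_def)
    finally show ?thesis using assms
      unfolding couplings_def is_dist_def \<Gamma>_def by auto
  qed
  moreover have "(\<Sum>(y, z)\<in>Xs \<times> Xs. \<Gamma> (y, z) * \<bar>y - z\<bar>) = 0"
    by (rule sum.neutral) (auto simp: \<Gamma>_def)
  moreover have "bdd_below ((\<lambda>\<Gamma>. \<Sum>(y, z)\<in>Xs \<times> Xs. \<Gamma> (y, z) * \<bar>y - z\<bar>) ` couplings Xs \<mu> \<mu>)"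
    by (rule bdd_belowI[where m=0])
      (auto simp: couplings_def is_dist_def intro!: sum_nonneg)
  ultimately show ?thesis unfolding wasserstein_def
    by (metis (no_types, lifting) cInf_lower image_eqI)
qed

theorem mainTheorem3:
  fixes Xs :: "real set" and As :: "'a set" and E U :: "real set"
    and P :: "real \<Rightarrow> 'a \<Rightarrow> real \<Rightarrow> real" and \<pi> :: "real \<Rightarrow> 'a \<Rightarrow> real"
    and \<delta> :: real and x :: real
  assumes "finite Xs" and "finite As" and "As \<noteq> {}"
    and "E \<subseteq> Xs" and "U \<subseteq> Xs" and "E \<inter> U = {}"
    and "\<forall>y\<in>Xs - (E \<union> U). \<forall>a\<in>As. is_dist Xs (P y a)"
    and "\<forall>y\<in>Xs. is_dist As (\<pi> y)"
    and "0 \<le> \<delta>"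
    and "x \<in> Xs - (E \<union> U)"
  shows "robust_safety Xs As E U P \<delta> \<pi> x
           \<le> (\<Sum>a\<in>As. \<pi> x a * robust_Q Xs As E U P \<delta> \<pi> x a)"
proof -
  let ?A = "ambiguity_set Xs As E U P \<delta>"
  have "P \<in> ?A"
  proof -
    have "is_dist Xs (P y a) \<and> wasserstein Xs (P y a) (P y a) \<le> \<delta>"
      if "y \<in> Xs - (E \<union> U)" "a \<in> As" for y a
    proof
      show d: "is_dist Xs (P y a)" using assms(7) that by blast
      have "wasserstein Xs (P y a) (P y a) \<le> 0" by (rule wasserstein_self[OF assms(1) d])
      then show "wasserstein Xs (P y a) (P y a) \<le> \<delta>" using assms(9) by linarith
    qed
    then show ?thesis unfolding ambiguity_set_def by blast
  qed
  then have ne: "?A \<noteq> {}" by auto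
  have bdd: "bdd_above ((\<lambda>Pt. expected_cost Xs As E U Pt \<pi> x a) ` ?A)" if "a \<in> As" for a
    by (rule bdd_aboveI[where M=1])
      (use that assms in \<open>auto simp: ambiguity_set_def intro!: ec_le1\<close>)
  show ?thesis
    unfolding robust_safety_def
  proof (rule cSUP_least[OF ne])
    fix Pt assume Pt: "Pt \<in> ?A"
    then have Ptd: "\<forall>y\<in>Xs - (E \<union> U). \<forall>a\<in>As. is_dist Xs (Pt y a)"
      by (auto simp: ambiguity_set_def)
    have "unsafe_prob Xs As E U Pt \<pi> x = (\<Sum>a\<in>As. \<pi> x a * expected_cost Xs As E U Pt \<pi> x a)"
      by (rule unsafe_eq) (use assms Ptd in auto)
    also have "\<dots> \<le> (\<Sum>a\<in>As. \<pi> x a * robust_Q Xs As E U P \<delta> \<pi> x a)"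
    proof (rule sum_mono, rule mult_left_mono)
      fix a assume a: "a \<in> As"
      show "expected_cost Xs As E U Pt \<pi> x a \<le> robust_Q Xs As E U P \<delta> \<pi> x a"
        unfolding robust_Q_def by (rule cSUP_upper[OF Pt bdd[OF a]])
      show "0 \<le> \<pi> x a" using assms by (auto simp: is_dist_def)
    qed
    finally show "unsafe_prob Xs As E U Pt \<pi> x \<le> (\<Sum>a\<in>As. \<pi> x a * robust_Q Xs As E U P \<delta> \<pi> x a)" .
  qed
qed

end
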